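(* In the setting of the context, there exists a unique solution $\psi$ of the initial value problem \[ \psi'\psi-\frac{\gamma+\delta}{u}\psi=-\delta\,\frac{\beta N-\beta\tilde S e^{(\beta/\gamma)\tilde R}u+\gamma\log u}{u},\quad u\in\bigl(e^{-(\beta/\gamma)\alpha},e^{-(\beta/\gamma)\tilde R}\bigr),\qquad \psi\bigl(e^{-(\beta/\gamma)\tilde R}\bigr)=\beta\tilde I, \] satisfying $\psi(u)>0$ for all $u\in\bigl(e^{-(\beta/\gamma)\alpha},e^{-(\beta/\gamma)\tilde R}\bigr]$.
   Context: Let $\beta,\gamma,\delta>0$ be constants and $\tilde S,\tilde E,\tilde I,\tilde R$ real numbers with $N:=\tilde S+\tilde E+\tilde I+\tilde R>0$. Standing assumptions: (A1) $\tilde I>0$; (A2) $\tilde E>(\gamma/\delta)\tilde I$; (A3) $\tilde S>\delta\tilde E/(\beta\tilde I)$; (A4) $\tilde R\ge 0$ and $N>\tilde S e^{(\beta/\gamma)\tilde R}+\tilde R$. Let $\alpha$ be the unique solution in $(\tilde R,N)$ of $x=N-\tilde S e^{(\beta/\gamma)\tilde R}e^{-(\beta/\gamma)x}$, and assume (A5) $\tilde S<(\gamma/\beta)e^{(\beta/\gamma)(\alpha-\tilde R)}$. *)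

theory Defs
  imports Complex_Main
begin

end

theory Submission
  imports Defs "HOL-Analysis.Analysis"
begin

lemma picard:
  fixes f :: "real \<Rightarrow> real \<Rightarrow> real" and c b y0 L :: real
  assumes cb: "c < b" and L: "L > 0"
    and fc: "\<And>y. continuous_on UNIV y \<Longrightarrow> continuous_on UNIV (\<lambda>s. f s (y s))"
    and lip: "\<And>s x x'. \<bar>f s x - f s x'\<bar> \<le> L * \<bar>x - x'\<bar>"
  shows "\<exists>y. continuous_on UNIV y \<and> (\<forall>u\<in>{c..b}. y u = y0 - integral {u..b} (\<lambda>s. f s (y s)))"
proof -
  define p where "p u = max c (min b u)" for u
  define K where "K = 2*L"
  have K: "K > 0" using L by (simp add: K_def)
  define w where "w u = exp (K * (b - p u))" for u
  have pc: "continuous_on UNIV p" unfolding p_def by (intro continuous_intros)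
  have wc: "continuous_on UNIV w" unfolding w_def p_def by (intro continuous_intros)
  have pin: "p u \<in> {c..b}" for u using cb by (auto simp: p_def)
  have pid: "u \<in> {c..b} \<Longrightarrow> p u = u" for u by (auto simp: p_def)
  have wpos: "w u > 0" for u by (simp add: w_def)
  have pp: "p (p u) = p u" for u using pid pin by blast
  define T where "T z u = (y0 - integral {p u..b} (\<lambda>s. f s (w s * apply_bcontfun z s))) / w u"
    for z :: "real \<Rightarrow>\<^sub>C real" and u
  have Tb: "T z \<in> bcontfun" for z
  proof -
    let ?g = "\<lambda>s. f s (w s * apply_bcontfun z s)"
    have gc: "continuous_on UNIV ?g" by (rule fc) (intro continuous_intros wc continuous_on_apply_bcontfun)
    have ic: "continuous_on {c..b} (\<lambda>v. integral {v..b} ?g)"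
      by (rule indefinite_integral_continuous_1'[OF integrable_continuous_interval])
        (rule continuous_on_subset[OF gc], simp)
    have "continuous_on UNIV (\<lambda>u. integral {p u..b} ?g)"
      using continuous_on_compose2[OF ic pc] pin by blast
    hence c1: "continuous_on UNIV (T z)" unfolding T_def using wc wpos
      by (intro continuous_intros) (auto simp: less_imp_neq[symmetric] dest: sym)
    have "T z u = T z (p u)" for u unfolding T_def w_def pp ..
    hence "range (T z) = T z ` {c..b}" using pin by (auto simp: image_def) (metis atLeastAtMost_iff)
    moreover have "bounded (T z ` {c..b})"
      by (intro compact_imp_bounded compact_continuous_image continuous_on_subset[OF c1]) auto
    ultimately show ?thesis using c1 by (simp add: bcontfun_def)
  qed
  define \<Phi> where "\<Phi> z = Bcontfun (T z)" for z
  have \<Phi>app: "apply_bcontfun (\<Phi> z) = T z" for z using Tb by (simp add: \<Phi>_def Bcontfun_inverse)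
  have contr: "dist (\<Phi> z1) (\<Phi> z2) \<le> (1/2) * dist z1 z2" for z1 z2
  proof (rule dist_bound)
    fix u
    define v where "v = p u"
    define D where "D = dist z1 z2"
    have v: "c \<le> v" "v \<le> b" using pin by (auto simp: v_def)
    let ?g1 = "\<lambda>s. f s (w s * apply_bcontfun z1 s)"
    let ?g2 = "\<lambda>s. f s (w s * apply_bcontfun z2 s)"
    have g1c: "continuous_on {v..b} ?g1" 
      by (rule continuous_on_subset[OF fc]) (intro continuous_intros wc continuous_on_apply_bcontfun, simp)
    have g2c: "continuous_on {v..b} ?g2" 
      by (rule continuous_on_subset[OF fc]) (intro continuous_intros wc continuous_on_apply_bcontfun, simp)
    have hs: "norm (?g1 s - ?g2 s) \<le> L * D * exp (K*(b - s))" if "s \<in> {v..b}" for s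
    proof -
      have ws: "w s = exp (K*(b - s))" using that v pid[of s] by (simp add: w_def)
      have "norm (?g1 s - ?g2 s) \<le> L * \<bar>w s * z1 s - w s * z2 s\<bar>" using lip by simp
      also have "\<bar>w s * z1 s - w s * z2 s\<bar> = w s * \<bar>z1 s - z2 s\<bar>"
        using wpos[of s] by (simp add: abs_mult right_diff_distrib[symmetric])
      also have "\<bar>z1 s - z2 s\<bar> \<le> D" using dist_bounded[of z1 s z2] by (simp add: D_def dist_real_def)
      finally show ?thesis using L wpos[of s] ws
        by (smt (verit, best) mult.commute mult_left_mono mult.assoc)
    qed
    have int_exp: "((\<lambda>s. exp (K*(b-s))) has_integral ((exp (K*(b-v)) - 1)/K)) {v..b}"
    proof -
      have "((\<lambda>s. exp (K*(b-s))) has_integral ((\<lambda>s. - exp (K*(b-s))/K) b - (\<lambda>s. - exp (K*(b-s))/K) v)) {v..b}"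
        by (rule fundamental_theorem_of_calculus[OF v(2)])
          (use K in \<open>auto intro!: derivative_eq_intros simp: has_real_derivative_iff_has_vector_derivative[symmetric]\<close>)
      thus ?thesis by (simp add: diff_divide_distrib)
    qed
    have "norm (integral {v..b} (\<lambda>s. ?g1 s - ?g2 s)) \<le> integral {v..b} (\<lambda>s. L * D * exp (K*(b - s)))"
      by (rule integral_norm_bound_integral)
        (use hs int_exp g1c g2c in \<open>auto intro!: integrable_continuous_interval continuous_intros\<close>)
    also have "\<dots> = L * D * ((exp (K*(b-v)) - 1)/K)"
      using integral_unique[OF int_exp] by simp
    finally have I: "\<bar>integral {v..b} ?g1 - integral {v..b} ?g2\<bar> \<le> L * D * ((exp (K*(b-v)) - 1)/K)"
      using integral_diff[OF integrable_continuous_interval[OF g1c] integrable_continuous_interval[OF g2c]]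
      by simp
    have wu: "w u = exp (K*(b-v))" by (simp add: w_def v_def)
    have "dist (\<Phi> z1 u) (\<Phi> z2 u) = \<bar>integral {v..b} ?g1 - integral {v..b} ?g2\<bar> / w u"
      using wpos[of u] by (simp add: \<Phi>app T_def dist_real_def v_def[symmetric] diff_divide_distrib[symmetric] abs_div abs_minus_commute)
    also have "\<dots> \<le> L * D * ((exp (K*(b-v)) - 1)/K) / exp (K*(b-v))"
      using divide_right_mono[OF I, of "exp (K*(b-v))"] wu by simp
    also have "\<dots> \<le> L * D / K"
    proof -
      have D0: "D \<ge> 0" by (simp add: D_def)
      have "L * D * ((exp (K*(b-v)) - 1)/K) \<le> L * D / K * exp (K*(b-v))"
        using L K D0 by (simp add: field_simps)
      thus ?thesis by (subst pos_divide_le_eq) auto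
    qed
    also have "\<dots> = (1/2) * dist z1 z2" using L by (simp add: K_def D_def)
    finally show "dist (\<Phi> z1 u) (\<Phi> z2 u) \<le> (1/2) * dist z1 z2" .
  qed
  obtain z where z: "\<Phi> z = z" using banach_fix_type[of "1/2" \<Phi>] contr by auto
  define y where "y s = w s * apply_bcontfun z s" for s
  have "continuous_on UNIV y" unfolding y_def by (intro continuous_intros wc continuous_on_apply_bcontfun)
  moreover have "\<forall>u\<in>{c..b}. y u = y0 - integral {u..b} (\<lambda>s. f s (y s))"
  proof
    fix u assume u: "u \<in> {c..b}"
    have "apply_bcontfun z u = T z u" using z \<Phi>app by metis
    thus "y u = y0 - integral {u..b} (\<lambda>s. f s (y s))"
      using wpos[of u] pid[OF u] by (simp add: y_def T_def)
  qed
  ultimately show ?thesis by blast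
qed

definition odesol :: "real \<Rightarrow> real \<Rightarrow> (real \<Rightarrow> real) \<Rightarrow> real \<Rightarrow> real \<Rightarrow> real \<Rightarrow> (real \<Rightarrow> real) \<Rightarrow> bool" where
  "odesol A d F b y0 c \<phi> \<longleftrightarrow> continuous_on {c..b} \<phi> \<and>
     (\<forall>u\<in>{c<..<b}. (\<phi> has_real_derivative (A/u - d * F u / (u * \<phi> u))) (at u)) \<and>
     \<phi> b = y0 \<and> (\<forall>u\<in>{c..b}. \<phi> u > 0)"

lemma odesol_mono: "odesol A d F b y0 c \<phi> \<Longrightarrow> c \<le> c' \<Longrightarrow> odesol A d F b y0 c' \<phi>"
  unfolding odesol_def by (auto intro: continuous_on_subset)

lemma cont_bound:
  fixes g :: "real \<Rightarrow> real"
  assumes "continuous_on {c..b} g"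
  shows "\<exists>M. \<forall>u\<in>{c..b}. \<bar>g u\<bar> \<le> M"
proof -
  have "bounded (g ` {c..b})" by (intro compact_imp_bounded compact_continuous_image assms) auto
  thus ?thesis by (auto simp: bounded_real)
qed

lemma cont_min_pos:
  fixes g :: "real \<Rightarrow> real"
  assumes "continuous_on {c..b} g" "c \<le> b" "\<forall>u\<in>{c..b}. g u > 0"
  shows "\<exists>m>0. \<forall>u\<in>{c..b}. g u \<ge> m"
proof -
  obtain x where "x \<in> {c..b}" "\<forall>y\<in>{c..b}. g x \<le> g y"
    using continuous_attains_inf[of "{c..b}" g] assms by auto
  thus ?thesis using assms(3) by blast
qed

lemma odesol_uniq:
  assumes c: "0 < c" "c \<le> b" and Fc: "continuous_on {c..b} F"
    and s1: "odesol A d F b y0 c \<phi>1" and s2: "odesol A d F b y0 c \<phi>2"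
  shows "\<forall>u\<in>{c..b}. \<phi>1 u = \<phi>2 u"
proof
  fix u assume u: "u \<in> {c..b}"
  define g where "g x = d * F x / (x * \<phi>1 x * \<phi>2 x)" for x
  have p1: "\<forall>x\<in>{c..b}. \<phi>1 x > 0" and p2: "\<forall>x\<in>{c..b}. \<phi>2 x > 0"
    using s1 s2 by (auto simp: odesol_def)
  have gc: "continuous_on {c..b} g" unfolding g_def using s1 s2 Fc p1 p2 c
    by (intro continuous_intros) (auto simp: odesol_def)
  obtain L0 where L0: "\<forall>x\<in>{c..b}. \<bar>g x\<bar> \<le> L0" using cont_bound[OF gc] by blast
  define L where "L = \<bar>L0\<bar>"
  define D where "D x = \<phi>1 x - \<phi>2 x" for x
  define h where "h x = (D x)^2 * exp (2*L*x)" for x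
  have hc: "continuous_on {u..b} h" unfolding h_def D_def
    using s1 s2 u by (intro continuous_intros) (auto simp: odesol_def intro: continuous_on_subset)
  have hd: "\<exists>y. DERIV h x :> y \<and> y \<ge> 0" if x: "u < x" "x < b" for x
  proof -
    have xi: "x \<in> {c<..<b}" using x u by auto
    have d1: "DERIV \<phi>1 x :> A/x - d * F x / (x * \<phi>1 x)" using s1 xi by (auto simp: odesol_def)
    have d2: "DERIV \<phi>2 x :> A/x - d * F x / (x * \<phi>2 x)" using s2 xi by (auto simp: odesol_def)
    have pos: "\<phi>1 x > 0" "\<phi>2 x > 0" "x > 0" using p1 p2 xi c by auto
    have "DERIV D x :> (A/x - d * F x / (x * \<phi>1 x)) - (A/x - d * F x / (x * \<phi>2 x))"
      unfolding D_def by (intro DERIV_diff d1 d2)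
    moreover have "(A/x - d * F x / (x * \<phi>1 x)) - (A/x - d * F x / (x * \<phi>2 x)) = g x * D x"
      using pos by (simp add: g_def D_def field_simps)
    ultimately have dD: "DERIV D x :> g x * D x" by simp
    have "DERIV h x :> 2 * D x * (g x * D x) * exp (2*L*x) + (D x)^2 * (exp (2*L*x) * (2*L))"
      unfolding h_def by (auto intro!: derivative_eq_intros dD)
    moreover have "2 * D x * (g x * D x) * exp (2*L*x) + (D x)^2 * (exp (2*L*x) * (2*L))
        = 2 * (D x)^2 * exp (2*L*x) * (g x + L)"
      by (simp add: algebra_simps power2_eq_square)
    moreover have "\<bar>g x\<bar> \<le> L0" using L0 xi by auto
    hence "g x + L \<ge> 0" unfolding L_def by linarith
    ultimately show ?thesis by (intro exI[of _ "2 * (D x)^2 * exp (2*L*x) * (g x + L)"]) auto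
  qed
  have "h u \<le> h b" using u by (intro DERIV_nonneg_imp_increasing_open[OF _ hd hc]) auto
  moreover have "h b = 0" using s1 s2 by (simp add: h_def D_def odesol_def)
  ultimately have "(D u)^2 * exp (2*L*u) \<le> 0" by (simp add: h_def)
  hence "(D u)^2 \<le> 0" by (simp add: mult_le_0_iff)
  thus "\<phi>1 u = \<phi>2 u" by (simp add: D_def)
qed

lemma inv_max_lip:
  fixes x x' e :: real
  assumes e: "e > 0"
  shows "\<bar>1/max x e - 1/max x' e\<bar> \<le> \<bar>x - x'\<bar> / e^2"
proof -
  define m1 where "m1 = max x e"
  define m2 where "m2 = max x' e"
  have m: "m1 \<ge> e" "m2 \<ge> e" by (auto simp: m1_def m2_def)
  have mm: "\<bar>m1 - m2\<bar> \<le> \<bar>x - x'\<bar>" by (auto simp: m1_def m2_def)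
  have "1/m1 - 1/m2 = (m2 - m1) / (m1 * m2)" using m e by (simp add: field_simps)
  hence "\<bar>1/m1 - 1/m2\<bar> = \<bar>m1 - m2\<bar> / (m1 * m2)" using m e by (simp add: abs_div abs_minus_commute)
  also have "\<dots> \<le> \<bar>m1 - m2\<bar> / e^2"
    using m e by (intro divide_left_mono) (auto simp: power2_eq_square intro: mult_mono)
  also have "\<dots> \<le> \<bar>x - x'\<bar> / e^2" using mm e by (simp add: divide_right_mono)
  finally show ?thesis by (simp add: m1_def m2_def)
qed

lemma odesol_exists:
  assumes c: "0 < c" "c < b" and Fc: "continuous_on {c..b} F"
    and Fpos: "\<forall>u\<in>{c..b}. F u > 0" and y0: "y0 > 0" and A: "A > 0" and d: "d > 0"
  shows "\<exists>\<phi>. odesol A d F b y0 c \<phi>"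
proof -
  obtain mF where mF: "mF > 0" "\<forall>u\<in>{c..b}. F u \<ge> mF"
    using cont_min_pos[OF Fc _ Fpos] c by auto
  define e where "e = min (y0/2) (d*mF/(2*A))"
  have e: "e > 0" "e < y0" using y0 d mF A by (auto simp: e_def)
  have eF: "e * A < d * F u" if "u \<in> {c..b}" for u
  proof -
    have "e * A \<le> d*mF/2" using A by (simp add: e_def field_simps min_def)
    also have "\<dots> < d * mF" using d mF by simp
    also have "\<dots> \<le> d * F u" using mF that d by simp
    finally show ?thesis .
  qed
  have gc0: "continuous_on {c..b} (\<lambda>u. d * F u / u)" using Fc c by (intro continuous_intros) auto
  obtain M where M: "\<forall>u\<in>{c..b}. \<bar>d * F u / u\<bar> \<le> M" using cont_bound[OF gc0] by blast
  define L where "L = \<bar>M\<bar> / e^2 + 1"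
  have L: "L > 0" using e by (simp add: L_def add_nonneg_pos)
  define p where "p s = max c (min b s)" for s
  have pin: "p s \<in> {c..b}" for s using c by (auto simp: p_def)
  have pid: "u \<in> {c..b} \<Longrightarrow> p u = u" for u by (auto simp: p_def)
  have ppos: "p s > 0" for s using pin c by (auto intro: less_le_trans)
  have pc: "continuous_on UNIV p" unfolding p_def by (intro continuous_intros)
  have Fpc: "continuous_on UNIV (\<lambda>s. F (p s))"
    using continuous_on_compose2[OF Fc pc] pin by blast
  define f where "f s x = A / p s - d * F (p s) / (p s * max x e)" for s x
  have fc: "continuous_on UNIV (\<lambda>s. f s (y s))" if "continuous_on UNIV y" for y
  proof -
    have c2: "continuous_on UNIV (\<lambda>s. d * F (p s) / (p s * max (y s) e))"
      using Fpc pc that ppos e by (intro continuous_intros) (auto simp: less_imp_neq[symmetric] dest: sym)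
    have c1: "continuous_on UNIV (\<lambda>s. A / p s)"
      using pc ppos by (intro continuous_intros) (auto simp: less_imp_neq[symmetric])
    show ?thesis unfolding f_def by (rule continuous_on_diff[OF c1 c2])
  qed
  have lip: "\<bar>f s x - f s x'\<bar> \<le> L * \<bar>x - x'\<bar>" for s x x'
  proof -
    have mx: "max x e > 0" "max x' e > 0" using e by auto
    have "f s x - f s x' = (d * F (p s) / p s) * (1/max x' e - 1/max x e)"
      unfolding f_def using mx ppos[of s] by (simp add: field_simps)
    hence "\<bar>f s x - f s x'\<bar> = \<bar>d * F (p s) / p s\<bar> * \<bar>1/max x' e - 1/max x e\<bar>" by (simp add: abs_mult)
    also have "\<dots> \<le> \<bar>M\<bar> * (\<bar>x - x'\<bar> / e^2)"
      using M[rule_format, OF pin[of s]] abs_ge_self[of M] inv_max_lip[OF e(1), of x' x]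
      by (intro mult_mono) (auto simp: abs_minus_commute)
    also have "\<dots> \<le> L * \<bar>x - x'\<bar>" by (simp add: L_def field_simps)
    finally show ?thesis .
  qed
  obtain y where yc: "continuous_on UNIV y"
    and yi: "\<forall>u\<in>{c..b}. y u = y0 - integral {u..b} (\<lambda>s. f s (y s))"
    using picard[OF c(2) L fc lip, of y0] by blast
  define G where "G s = f s (y s)" for s
  have Gc: "continuous_on {c..b} G" unfolding G_def by (rule continuous_on_subset[OF fc[OF yc]]) simp
  have yd: "(y has_real_derivative G u) (at u within {c..b})" if u: "u \<in> {c..b}" for u
  proof -
    have "((\<lambda>x. y0 - integral {x..b} G) has_real_derivative 0 - - G u) (at u within {c..b})"
      by (intro DERIV_diff DERIV_const integral_has_real_derivative'[OF Gc u])
    hence "((\<lambda>x. y0 - integral {x..b} G) has_real_derivative G u) (at u within {c..b})" by simp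
    thus ?thesis
      by (rule has_field_derivative_transform_within[where d=1]) (use u yi in \<open>auto simp: G_def[abs_def]\<close>)
  qed
  have yb: "y b = y0" using yi c by auto
  have ygt: "\<forall>u\<in>{c..b}. y u > e"
  proof (rule ccontr)
    assume neg: "\<not> (\<forall>u\<in>{c..b}. y u > e)"
    define S where "S = {c..b} \<inter> y -` {..e}"
    have Sne: "S \<noteq> {}" using neg by (auto simp: S_def not_less)
    have Scl: "closed S" unfolding S_def
      by (intro continuous_closed_preimage continuous_on_subset[OF yc]) auto
    have Sbd: "bdd_above S" unfolding S_def by (auto intro: bdd_aboveI[of _ b])
    define u0 where "u0 = Sup S"
    have u0S: "u0 \<in> S" unfolding u0_def by (rule closed_contains_Sup[OF Sne Sbd Scl])
    have u0: "u0 \<in> {c..b}" "y u0 \<le> e" using u0S by (auto simp: S_def)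
    have u0b: "u0 < b" using u0 yb e by (cases "u0 = b") auto
    have "G u0 = A / u0 - d * F u0 / (u0 * e)"
      using u0 pid[OF u0(1)] e by (simp add: G_def f_def max_def)
    also have "\<dots> < 0"
    proof -
      have u0p: "u0 > 0" using u0 c by auto
      have "A / u0 - d * F u0 / (u0 * e) = (e * A - d * F u0) / (u0 * e)"
        using u0p e by (simp add: field_simps)
      also have "\<dots> < 0" using eF[OF u0(1)] u0p e by (intro divide_neg_pos) auto
      finally show ?thesis .
    qed
    finally obtain dd where dd: "dd > 0" "\<forall>h>0. u0 + h \<in> {c..b} \<longrightarrow> h < dd \<longrightarrow> y u0 > y (u0 + h)"
      using has_real_derivative_neg_dec_right[OF yd[OF u0(1)]] by blast
    define h where "h = min (dd/2) (b - u0)"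
    have h: "h > 0" "u0 + h \<in> {c..b}" "h < dd" using dd u0 u0b by (auto simp: h_def)
    hence "y (u0 + h) < y u0" using dd by blast
    hence "u0 + h \<in> S" using u0 h by (auto simp: S_def)
    hence "u0 + h \<le> u0" unfolding u0_def by (rule cSup_upper[OF _ Sbd])
    thus False using h by simp
  qed
  have Geq: "G u = A/u - d * F u / (u * y u)" if "u \<in> {c..b}" for u
  proof -
    have "max (y u) e = y u" using ygt that by auto
    thus ?thesis using pid[OF that] by (simp add: G_def f_def)
  qed
  have "odesol A d F b y0 c y"
    unfolding odesol_def
  proof (intro conjI ballI)
    show "continuous_on {c..b} y" by (rule continuous_on_subset[OF yc]) simp
    show "y b = y0" by (rule yb)
    show "y u > 0" if "u \<in> {c..b}" for u
    proof -
      have "y u > e" using ygt that by blast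
      thus ?thesis using e(1) by linarith
    qed
    fix u assume u: "u \<in> {c<..<b}"
    have uu: "u \<in> {c..b}" using u by auto
    have "(y has_real_derivative G u) (at u within {c<..<b})"
      by (rule DERIV_subset[OF yd[OF uu]]) auto
    moreover have "at u within {c<..<b} = at u" by (rule at_within_open[OF u]) simp
    ultimately have "(y has_real_derivative G u) (at u)" by simp
    thus "(y has_real_derivative A/u - d * F u / (u * y u)) (at u)" using Geq[OF uu] by simp
  qed
  thus ?thesis by blast
qed


lemma odesol_glue:
  assumes ab: "0 < a" "a < b" and Fc: "continuous_on {a<..b} F"
    and Fpos: "\<forall>u\<in>{a<..b}. F u > 0" and y0: "y0 > 0" and A: "A > 0" and d: "d > 0"
  shows "\<exists>\<psi>. (continuous_on {a<..b} \<psi> \<and>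
      (\<forall>u\<in>{a<..<b}. (\<psi> has_real_derivative (A/u - d * F u / (u * \<psi> u))) (at u)) \<and>
      \<psi> b = y0 \<and> (\<forall>u\<in>{a<..b}. \<psi> u > 0)) \<and>
    (\<forall>\<phi>. (continuous_on {a<..b} \<phi> \<and>
      (\<forall>u\<in>{a<..<b}. (\<phi> has_real_derivative (A/u - d * F u / (u * \<phi> u))) (at u)) \<and>
      \<phi> b = y0 \<and> (\<forall>u\<in>{a<..b}. \<phi> u > 0)) \<longrightarrow> (\<forall>u\<in>{a<..b}. \<phi> u = \<psi> u))"
proof -
  have ex: "\<exists>\<phi>. odesol A d F b y0 c \<phi>" if c: "c \<in> {a<..<b}" for c
  proof (rule odesol_exists)
    show "continuous_on {c..b} F" by (rule continuous_on_subset[OF Fc]) (use c in auto)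
    show "\<forall>u\<in>{c..b}. F u > 0" using Fpos c by auto
  qed (use c ab y0 A d in auto)
  define \<Phi> where "\<Phi> c = (SOME \<phi>. odesol A d F b y0 c \<phi>)" for c
  have s\<Phi>: "odesol A d F b y0 c (\<Phi> c)" if "c \<in> {a<..<b}" for c
    unfolding \<Phi>_def by (rule someI_ex[OF ex[OF that]])
  have agree: "\<Phi> c1 u = \<Phi> c2 u" if c12: "c1 \<in> {a<..<b}" "c2 \<in> {a<..<b}" and u: "u \<in> {max c1 c2..b}" for c1 c2 u
  proof -
    define c' where "c' = max c1 c2"
    have c': "0 < c'" "c' \<le> b" using c12 ab by (auto simp: c'_def)
    have Fc': "continuous_on {c'..b} F" by (rule continuous_on_subset[OF Fc]) (use c12 in \<open>auto simp: c'_def\<close>)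
    show ?thesis
      using odesol_uniq[OF c' Fc' odesol_mono[OF s\<Phi>[OF c12(1)]] odesol_mono[OF s\<Phi>[OF c12(2)]]] u
      by (auto simp: c'_def)
  qed
  define \<psi> where "\<psi> u = \<Phi> ((a+u)/2) u" for u
  have mid: "(a+u)/2 \<in> {a<..<b}" if "u \<in> {a<..b}" for u using that by auto
  have \<psi>eq: "\<psi> u = \<Phi> c u" if c: "c \<in> {a<..<b}" and u: "u \<in> {c..b}" for c u
    unfolding \<psi>_def by (rule agree) (use c u in auto)
  have P1: "continuous_on {a<..b} \<psi>"
    unfolding continuous_on_eq_continuous_within
  proof
    fix u assume u: "u \<in> {a<..b}"
    define c where "c = (a+u)/2"
    have c: "c \<in> {a<..<b}" "c < u" using u by (auto simp: c_def)
    have uin: "u \<in> {c..b}" using u c by auto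
    have "continuous_on {c..b} (\<Phi> c)" using s\<Phi>[OF c(1)] by (simp add: odesol_def)
    hence cc: "continuous (at u within {c..b}) (\<Phi> c)"
      using uin continuous_on_eq_continuous_within by blast
    have eqs: "\<And>x'. x' \<in> {c..b} \<Longrightarrow> dist x' u < 1 \<Longrightarrow> \<Phi> c x' = \<psi> x'"
      using \<psi>eq[OF c(1)] by metis
    have c1: "continuous (at u within {c..b}) \<psi>"
      by (rule continuous_transform_within[OF cc zero_less_one uin eqs])
    have "{c..b} \<inter> {c<..} - {u} = {a<..b} \<inter> {c<..} - {u}" using c by auto
    moreover have "u \<in> {c<..}" using c by auto
    ultimately have "at u within {c..b} = at u within {a<..b}"
      using at_within_nhd[OF _ open_greaterThan] by metis
    with c1 show "continuous (at u within {a<..b}) \<psi>" by simp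
  qed
  have P2: "\<forall>u\<in>{a<..<b}. (\<psi> has_real_derivative (A/u - d * F u / (u * \<psi> u))) (at u)"
  proof
    fix u assume u: "u \<in> {a<..<b}"
    define c where "c = (a+u)/2"
    have c: "c \<in> {a<..<b}" "c < u" using u by (auto simp: c_def)
    have "(\<Phi> c has_real_derivative (A/u - d * F u / (u * \<Phi> c u))) (at u)"
      using s\<Phi>[OF c(1)] u c unfolding odesol_def by auto
    hence "(\<psi> has_real_derivative (A/u - d * F u / (u * \<Phi> c u))) (at u)"
      by (rule has_field_derivative_transform_within_open[where S="{c<..<b}"])
        (use u c \<psi>eq[OF c(1)] in auto)
    moreover have "\<Phi> c u = \<psi> u" using \<psi>eq[OF c(1), of u] c u by auto
    ultimately show "(\<psi> has_real_derivative (A/u - d * F u / (u * \<psi> u))) (at u)" by simp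
  qed
  have P3: "\<psi> b = y0"
  proof -
    have c: "(a+b)/2 \<in> {a<..<b}" using ab by auto
    have "\<psi> b = \<Phi> ((a+b)/2) b" by (rule \<psi>eq[OF c]) (use ab in auto)
    thus ?thesis using s\<Phi>[OF c] by (simp add: odesol_def)
  qed
  have P4: "\<forall>u\<in>{a<..b}. \<psi> u > 0"
  proof
    fix u assume u: "u \<in> {a<..b}"
    have "\<psi> u = \<Phi> ((a+u)/2) u" by (simp add: \<psi>_def)
    thus "\<psi> u > 0" using s\<Phi>[OF mid[OF u]] u unfolding odesol_def by auto
  qed
  have P5: "\<forall>u\<in>{a<..b}. \<phi> u = \<psi> u"
    if h: "continuous_on {a<..b} \<phi> \<and>
      (\<forall>u\<in>{a<..<b}. (\<phi> has_real_derivative (A/u - d * F u / (u * \<phi> u))) (at u)) \<and>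
      \<phi> b = y0 \<and> (\<forall>u\<in>{a<..b}. \<phi> u > 0)" for \<phi>
  proof
    fix u assume u: "u \<in> {a<..b}"
    show "\<phi> u = \<psi> u"
    proof (cases "u = b")
      case True thus ?thesis using h P3 by simp
    next
      case False
      hence uu: "u \<in> {a<..<b}" using u by auto
      have "continuous_on {u..b} \<phi>" by (rule continuous_on_subset[of "{a<..b}"]) (use h uu in auto)
      hence so: "odesol A d F b y0 u \<phi>" unfolding odesol_def
        using h uu by auto
      have Fc': "continuous_on {u..b} F" by (rule continuous_on_subset[OF Fc]) (use uu in auto)
      have "\<phi> u = \<Phi> u u"
        using odesol_uniq[OF _ _ Fc' so s\<Phi>[OF uu]] uu ab by auto
      thus ?thesis using \<psi>eq[OF uu, of u] uu by auto
    qed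
  qed
  show ?thesis using P1 P2 P3 P4 P5 by blast
qed

lemma ode_form_iff:
  fixes dd p u A del Fu :: real
  assumes "u > 0" "p > 0"
  shows "(dd * p - (A / u) * p = - del * (Fu / u)) \<longleftrightarrow> dd = A/u - del * Fu / (u * p)"
proof -
  have up: "u * p > 0" using assms by simp
  have "(dd * p - (A / u) * p = - del * (Fu / u)) \<longleftrightarrow> u * (dd * p - (A / u) * p) = u * (- del * (Fu / u))"
    using assms by (simp only: mult_cancel_left) auto
  also have "\<dots> \<longleftrightarrow> dd * (u * p) = A * p - del * Fu"
  proof -
    have e1: "u * (dd * p - (A / u) * p) = dd * (u * p) - A * p" using assms by (simp add: field_simps)
    have e2: "u * (- del * (Fu / u)) = - (del * Fu)" using assms by (simp add: field_simps)
    show ?thesis unfolding e1 e2 by linarith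
  qed
  also have "\<dots> \<longleftrightarrow> dd = (A * p - del * Fu) / (u * p)"
    using assms up by (simp add: eq_divide_eq)
  also have "(A * p - del * Fu) / (u * p) = A/u - del * Fu / (u * p)"
    using assms by (simp add: field_simps)
  finally show ?thesis .
qed

theorem lemma8:
  fixes \<beta> \<gamma> \<delta> S E I R N \<alpha> :: real
  assumes pos: "\<beta> > 0" "\<gamma> > 0" "\<delta> > 0"
    and N_def: "N = S + E + I + R" and N_pos: "N > 0"
    and A1: "I > 0"
    and A2: "E > (\<gamma> / \<delta>) * I"
    and A3: "S > \<delta> * E / (\<beta> * I)"
    and A4: "R \<ge> 0" "N > S * exp ((\<beta> / \<gamma>) * R) + R"
    and alpha_in: "R < \<alpha>" "\<alpha> < N"
    and alpha_eq: "\<alpha> = N - S * exp ((\<beta> / \<gamma>) * R) * exp (- (\<beta> / \<gamma>) * \<alpha>)"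
    and A5: "S < (\<gamma> / \<beta>) * exp ((\<beta> / \<gamma>) * (\<alpha> - R))"
  shows "\<exists>\<psi> :: real \<Rightarrow> real.
     (continuous_on {exp (- (\<beta> / \<gamma>) * \<alpha>)<..exp (- (\<beta> / \<gamma>) * R)} \<psi>
      \<and> (\<forall>u \<in> {exp (- (\<beta> / \<gamma>) * \<alpha>)<..<exp (- (\<beta> / \<gamma>) * R)}.
           \<exists>d. (\<psi> has_real_derivative d) (at u) \<and>
               d * \<psi> u - ((\<gamma> + \<delta>) / u) * \<psi> u
                 = - \<delta> * ((\<beta> * N - \<beta> * S * exp ((\<beta> / \<gamma>) * R) * u + \<gamma> * ln u) / u))
      \<and> \<psi> (exp (- (\<beta> / \<gamma>) * R)) = \<beta> * I
      \<and> (\<forall>u \<in> {exp (- (\<beta> / \<gamma>) * \<alpha>)<..exp (- (\<beta> / \<gamma>) * R)}. \<psi> u > 0))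
   \<and> (\<forall>\<phi> :: real \<Rightarrow> real.
       (continuous_on {exp (- (\<beta> / \<gamma>) * \<alpha>)<..exp (- (\<beta> / \<gamma>) * R)} \<phi>
        \<and> (\<forall>u \<in> {exp (- (\<beta> / \<gamma>) * \<alpha>)<..<exp (- (\<beta> / \<gamma>) * R)}.
             \<exists>d. (\<phi> has_real_derivative d) (at u) \<and>
                 d * \<phi> u - ((\<gamma> + \<delta>) / u) * \<phi> u
                   = - \<delta> * ((\<beta> * N - \<beta> * S * exp ((\<beta> / \<gamma>) * R) * u + \<gamma> * ln u) / u))
        \<and> \<phi> (exp (- (\<beta> / \<gamma>) * R)) = \<beta> * I
        \<and> (\<forall>u \<in> {exp (- (\<beta> / \<gamma>) * \<alpha>)<..exp (- (\<beta> / \<gamma>) * R)}. \<phi> u > 0))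
       \<longrightarrow> (\<forall>u \<in> {exp (- (\<beta> / \<gamma>) * \<alpha>)<..exp (- (\<beta> / \<gamma>) * R)}. \<phi> u = \<psi> u))"
proof -
  define a where "a = exp (- (\<beta> / \<gamma>) * \<alpha>)"
  define b where "b = exp (- (\<beta> / \<gamma>) * R)"
  define k where "k = \<beta> * S * exp ((\<beta> / \<gamma>) * R)"
  define F where "F u = \<beta> * N - \<beta> * S * exp ((\<beta> / \<gamma>) * R) * u + \<gamma> * ln u" for u
  have Fk: "F u = \<beta> * N - k * u + \<gamma> * ln u" for u by (simp add: F_def k_def)
  have a0: "a > 0" by (simp add: a_def)
  have ab: "a < b"
  proof -
    have "(\<beta> / \<gamma>) * R < (\<beta> / \<gamma>) * \<alpha>" using pos alpha_in by (intro mult_strict_left_mono) auto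
    thus ?thesis unfolding a_def b_def by simp
  qed
  have Fa: "F a = 0"
  proof -
    have "\<gamma> * ln a = - \<beta> * \<alpha>" using pos by (simp add: a_def)
    moreover have "k * a = \<beta> * (N - \<alpha>)"
    proof -
      have h: "S * exp ((\<beta> / \<gamma>) * R) * a = N - \<alpha>" using alpha_eq unfolding a_def by linarith
      have "k * a = \<beta> * (S * exp ((\<beta> / \<gamma>) * R) * a)" unfolding k_def by (simp only: ac_simps)
      also have "\<dots> = \<beta> * (N - \<alpha>)" by (simp only: h)
      finally show ?thesis .
    qed
    ultimately show ?thesis by (simp add: Fk algebra_simps)
  qed
  have EI: "E + I > 0"
  proof -
    have "(\<gamma> / \<delta>) * I > 0" using pos A1 by simp
    thus ?thesis using A2 A1 by linarith
  qed
  have Fb: "F b > 0"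
  proof -
    have "\<gamma> * ln b = - \<beta> * R" using pos by (simp add: b_def)
    moreover have "k * b = \<beta> * S"
      unfolding k_def b_def by (simp add: mult.assoc exp_add[symmetric])
    ultimately have "F b = \<beta> * (E + I)" by (simp add: Fk N_def algebra_simps)
    thus ?thesis using EI pos by simp
  qed
  have ka: "k < \<gamma> / a"
  proof -
    have e: "\<beta> * exp ((\<beta> / \<gamma>) * R) > 0" using pos by simp
    have "k = (\<beta> * exp ((\<beta> / \<gamma>) * R)) * S" by (simp add: k_def)
    also have "\<dots> < (\<beta> * exp ((\<beta> / \<gamma>) * R)) * ((\<gamma> / \<beta>) * exp ((\<beta> / \<gamma>) * (\<alpha> - R)))"
      by (rule mult_strict_left_mono[OF A5 e])
    also have "\<dots> = \<gamma> * exp ((\<beta> / \<gamma>) * (\<alpha> - R) + (\<beta> / \<gamma>) * R)"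
      using pos by (simp add: exp_add)
    also have "(\<beta> / \<gamma>) * (\<alpha> - R) + (\<beta> / \<gamma>) * R = (\<beta> / \<gamma>) * \<alpha>"
      by (simp add: right_diff_distrib)
    also have "\<gamma> * exp ((\<beta> / \<gamma>) * \<alpha>) = \<gamma> / a" by (simp add: a_def exp_minus divide_inverse)
    finally show ?thesis .
  qed
  have dF: "DERIV F s :> \<gamma> / s - k" if "s > 0" for s
    unfolding Fk using that by (auto intro!: derivative_eq_intros simp: field_simps)
  have Fpos: "\<forall>u\<in>{a<..b}. F u > 0"
  proof
    fix u assume u: "u \<in> {a<..b}"
    show "F u > 0"
    proof (cases "\<gamma> / u > k")
      case True
      have "F a < F u"
      proof (rule DERIV_pos_imp_increasing[where f=F])
        show "a < u" using u by simp
        fix x assume x: "a \<le> x" "x \<le> u"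
        have x0: "x > 0" using x a0 by simp
        have "\<gamma> / u \<le> \<gamma> / x" using x x0 pos by (simp add: divide_left_mono)
        thus "\<exists>y. DERIV F x :> y \<and> y > 0" using dF[OF x0] True by (intro exI[of _ "\<gamma>/x - k"]) auto
      qed
      thus ?thesis using Fa by simp
    next
      case False
      have "F u \<ge> F b"
      proof (rule DERIV_nonpos_imp_nonincreasing[where f=F])
        show "u \<le> b" using u by simp
        fix x assume x: "u \<le> x" "x \<le> b"
        have x0: "x > 0" "u > 0" using x a0 u by auto
        have "\<gamma> / x \<le> \<gamma> / u" using x x0 pos by (simp add: divide_left_mono)
        thus "\<exists>y. DERIV F x :> y \<and> y \<le> 0" using dF[OF x0(1)] False by (intro exI[of _ "\<gamma>/x - k"]) auto
      qed
      thus ?thesis using Fb by simp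
    qed
  qed
  have Fc: "continuous_on {a<..b} F" unfolding F_def using a0
    by (intro continuous_intros) auto
  have y0: "\<beta> * I > 0" using pos A1 by simp
  have A: "\<gamma> + \<delta> > 0" using pos by simp
  obtain \<psi> where
    P: "continuous_on {a<..b} \<psi>"
       "\<forall>u\<in>{a<..<b}. (\<psi> has_real_derivative ((\<gamma>+\<delta>)/u - \<delta> * F u / (u * \<psi> u))) (at u)"
       "\<psi> b = \<beta> * I" "\<forall>u\<in>{a<..b}. \<psi> u > 0"
    and U: "\<forall>\<phi>. (continuous_on {a<..b} \<phi> \<and>
      (\<forall>u\<in>{a<..<b}. (\<phi> has_real_derivative ((\<gamma>+\<delta>)/u - \<delta> * F u / (u * \<phi> u))) (at u)) \<and>
      \<phi> b = \<beta> * I \<and> (\<forall>u\<in>{a<..b}. \<phi> u > 0)) \<longrightarrow> (\<forall>u\<in>{a<..b}. \<phi> u = \<psi> u)"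
    using odesol_glue[OF a0 ab Fc Fpos y0 A pos(3)] by blast
  have conv: "(\<exists>dd. (\<phi> has_real_derivative dd) (at u) \<and>
               dd * \<phi> u - ((\<gamma> + \<delta>) / u) * \<phi> u = - \<delta> * (F u / u))
       \<longleftrightarrow> (\<phi> has_real_derivative ((\<gamma>+\<delta>)/u - \<delta> * F u / (u * \<phi> u))) (at u)"
    if "u \<in> {a<..<b}" "\<phi> u > 0" for \<phi> u
  proof -
    have u0: "u > 0" using that a0 by auto
    show ?thesis using ode_form_iff[OF u0 that(2)] by auto
  qed
  show ?thesis
    unfolding a_def[symmetric] b_def[symmetric] F_def[symmetric]
  proof (intro exI[of _ \<psi>] conjI allI impI ballI)
    show "continuous_on {a<..b} \<psi>" "\<psi> b = \<beta> * I" using P by auto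
    show "\<psi> u > 0" if "u \<in> {a<..b}" for u using P that by auto
    show "\<exists>dd. (\<psi> has_real_derivative dd) (at u) \<and>
               dd * \<psi> u - ((\<gamma> + \<delta>) / u) * \<psi> u = - \<delta> * (F u / u)" if u: "u \<in> {a<..<b}" for u
      using conv[OF u, of \<psi>] P u by auto
  next
    fix \<phi> u
    assume h: "continuous_on {a<..b} \<phi> \<and>
        (\<forall>u\<in>{a<..<b}. \<exists>dd. (\<phi> has_real_derivative dd) (at u) \<and>
               dd * \<phi> u - ((\<gamma> + \<delta>) / u) * \<phi> u = - \<delta> * (F u / u)) \<and>
        \<phi> b = \<beta> * I \<and> (\<forall>u\<in>{a<..b}. \<phi> u > 0)"
      and u: "u \<in> {a<..b}"
    have "\<forall>u\<in>{a<..<b}. (\<phi> has_real_derivative ((\<gamma>+\<delta>)/u - \<delta> * F u / (u * \<phi> u))) (at u)"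
    proof
      fix v assume v: "v \<in> {a<..<b}"
      have "\<phi> v > 0" using h v by auto
      thus "(\<phi> has_real_derivative ((\<gamma>+\<delta>)/v - \<delta> * F v / (v * \<phi> v))) (at v)"
        using conv[OF v] h v by blast
    qed
    thus "\<phi> u = \<psi> u" using U h u by blast
  qed
qed

end
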